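(* Let $\delta_B,\delta_R\ge1$ be integers, let $T_0(\lambda)$ be as in the context, and let $\mathcal C=\{(\lambda,\mu)\in\mathbb C^2:\ \mu\text{ is an eigenvalue of }T_0(\lambda)\}$. Then the map $(\lambda,\mu)\mapsto\mu$ takes $\mathcal C$ into $\mathbb C\setminus\{0\}$ and is surjective onto $\mathbb C\setminus\{0\}$. Moreover, near any $\lambda_0$ at which $T_0(\lambda_0)$ has two distinct eigenvalues, each locally defined analytic eigenvalue function $\mu=\Psi(\lambda)$ satisfies $\Psi'(\lambda_0)\neq0$ unless $\cos(\omega_0)\sin(\omega_0)/\omega_0=0$, where $\omega_0=\sqrt{\lambda_0}$.
   Context: With $\omega=\sqrt\lambda$, define the entire functions $c=\cos\omega$, $c'=-\omega\sin\omega$, $s=\sin\omega/\omega$, $s'=\cos\omega$, and $M_0=\begin{pmatrix}c&s\\c'&s'\end{pmatrix}$, $J_B=\operatorname{diag}(1,1/\delta_B)$, $J_R=\operatorname{diag}(1,1/\delta_R)$, $T_0(\lambda)=J_RM_0J_BM_0$. Then $\det T_0=1/(\delta_B\delta_R)$ and $\operatorname{tr}T_0(\lambda)=\cos^2\omega\,(1+\frac1{\delta_B})(1+\frac1{\delta_R})-(\frac1{\delta_R}+\frac1{\delta_B})$; its eigenvalues $\mu^\pm$ satisfy $\mu^+\mu^-=1/(\delta_B\delta_R)$. The expression $\cos(\omega)\sin(\omega)/\omega$ is an entire function of $\lambda$. *)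

theory Defs
  imports "HOL-Analysis.Analysis"
begin

text \<open>omega = csqrt lambda; the functions below are the entire functions of lambda
  from the paper (s is extended by its limit 1 at lambda = 0).\<close>

definition c0 :: "complex \<Rightarrow> complex" where
  "c0 z = cos (csqrt z)"

definition c0' :: "complex \<Rightarrow> complex" where
  "c0' z = - csqrt z * sin (csqrt z)"

definition s0 :: "complex \<Rightarrow> complex" where
  "s0 z = (if z = 0 then 1 else sin (csqrt z) / csqrt z)"

definition s0' :: "complex \<Rightarrow> complex" where
  "s0' z = cos (csqrt z)"

definition M0 :: "complex \<Rightarrow> complex^2^2" where
  "M0 z = vector [vector [c0 z, s0 z], vector [c0' z, s0' z]]"

definition Jmat :: "nat \<Rightarrow> complex^2^2" where
  "Jmat \<delta> = vector [vector [1, 0], vector [0, 1 / of_nat \<delta>]]"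

definition T0 :: "nat \<Rightarrow> nat \<Rightarrow> complex \<Rightarrow> complex^2^2" where
  "T0 \<delta>B \<delta>R z = Jmat \<delta>R ** M0 z ** Jmat \<delta>B ** M0 z"

definition is_eigenvalue :: "complex^2^2 \<Rightarrow> complex \<Rightarrow> bool" where
  "is_eigenvalue A \<mu> \<longleftrightarrow> (\<exists>v. v \<noteq> 0 \<and> A *v v = \<mu> *s v)"

definition curveC :: "nat \<Rightarrow> nat \<Rightarrow> (complex \<times> complex) set" where
  "curveC \<delta>B \<delta>R = {(z, \<mu>). is_eigenvalue (T0 \<delta>B \<delta>R z) \<mu>}"

end

theory Submission
  imports Defs
begin

lemma T0_entries:
  shows "T0 nb nr z $ 1 $ 1 = c0 z*c0 z + (1/of_nat nb) * s0 z * c0' z"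
    and "T0 nb nr z $ 1 $ 2 = c0 z * s0 z + (1/of_nat nb) * s0 z * s0' z"
    and "T0 nb nr z $ 2 $ 1 = (1/of_nat nr)*(c0' z*c0 z + (1/of_nat nb) * s0' z * c0' z)"
    and "T0 nb nr z $ 2 $ 2 = (1/of_nat nr)*(c0' z * s0 z + (1/of_nat nb) * s0' z * s0' z)"
  unfolding T0_def M0_def Jmat_def
  by (simp_all add: matrix_matrix_mult_def sum_2 vector_def algebra_simps)

lemma detM: "c0 z * s0' z - s0 z * c0' z = 1"
proof (cases "z = 0")
  case True then show ?thesis by (simp add: c0_def s0_def s0'_def c0'_def)
next
  case False
  then have "csqrt z \<noteq> 0" by simp
  then show ?thesis using sin_squared_eq[of "csqrt z"]
    by (simp add: c0_def s0_def s0'_def c0'_def False field_simps power2_eq_square)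
qed

lemma eig2:
  fixes A :: "complex^2^2"
  shows "is_eigenvalue A \<mu> \<longleftrightarrow> (A$1$1 - \<mu>)*(A$2$2 - \<mu>) - A$1$2*A$2$1 = 0"
proof
  assume "is_eigenvalue A \<mu>"
  then obtain v where v: "v \<noteq> 0" "A *v v = \<mu> *s v" unfolding is_eigenvalue_def by blast
  have e1: "(A$1$1 - \<mu>) * v$1 + A$1$2 * v$2 = 0" using arg_cong[OF v(2), of "\<lambda>x. x$1"]
    by (simp add: matrix_vector_mult_def sum_2 algebra_simps)
  have e2: "A$2$1 * v$1 + (A$2$2 - \<mu>) * v$2 = 0" using arg_cong[OF v(2), of "\<lambda>x. x$2"]
    by (simp add: matrix_vector_mult_def sum_2 algebra_simps)
  let ?d = "(A$1$1 - \<mu>)*(A$2$2 - \<mu>) - A$1$2*A$2$1"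
  have "?d * v$1 = (A$2$2 - \<mu>) * ((A$1$1 - \<mu>) * v$1 + A$1$2 * v$2) - A$1$2 * (A$2$1 * v$1 + (A$2$2 - \<mu>) * v$2)"
    by (simp add: algebra_simps)
  then have d1: "?d * v$1 = 0" using e1 e2 by simp
  have "?d * v$2 = (A$1$1 - \<mu>) * (A$2$1 * v$1 + (A$2$2 - \<mu>) * v$2) - A$2$1 * ((A$1$1 - \<mu>) * v$1 + A$1$2 * v$2)"
    by (simp add: algebra_simps)
  then have d2: "?d * v$2 = 0" using e1 e2 by simp
  have "v$1 \<noteq> 0 \<or> v$2 \<noteq> 0" using v(1) by (metis exhaust_2 vec_eq_iff zero_index)
  then show "?d = 0" using d1 d2 by auto
next
  assume d: "(A$1$1 - \<mu>)*(A$2$2 - \<mu>) - A$1$2*A$2$1 = 0"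
  have ev: "is_eigenvalue A \<mu>" if "w \<noteq> 0"
     "(A$1$1 - \<mu>)*w$1 + A$1$2*w$2 = 0" "A$2$1*w$1 + (A$2$2 - \<mu>)*w$2 = 0" for w :: "complex^2"
  proof -
    have "A *v w = \<mu> *s w"
      using that by (simp add: vec_eq_iff forall_2 matrix_vector_mult_def sum_2 algebra_simps)
    then show ?thesis unfolding is_eigenvalue_def using that(1) by blast
  qed
  show "is_eigenvalue A \<mu>"
  proof (cases "A$1$2 \<noteq> 0 \<or> A$1$1 \<noteq> \<mu>")
    case True
    let ?w = "vector [A$1$2, \<mu> - A$1$1] :: complex^2"
    show ?thesis
    proof (rule ev[of ?w])
      show "?w \<noteq> 0" using True by (auto simp: vec_eq_iff forall_2 vector_def)
      show "(A$1$1 - \<mu>)*?w$1 + A$1$2*?w$2 = 0" by (simp add: vector_def algebra_simps)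
      show "A$2$1*?w$1 + (A$2$2 - \<mu>)*?w$2 = 0" using d by (simp add: vector_def algebra_simps)
    qed
  next
    case False
    show ?thesis
    proof (cases "A$2$1 \<noteq> 0 \<or> A$2$2 \<noteq> \<mu>")
      case True
      let ?w = "vector [\<mu> - A$2$2, A$2$1] :: complex^2"
      show ?thesis
      proof (rule ev[of ?w])
        show "?w \<noteq> 0" using True by (auto simp: vec_eq_iff forall_2 vector_def)
        show "(A$1$1 - \<mu>)*?w$1 + A$1$2*?w$2 = 0" using False by (simp add: vector_def algebra_simps)
        show "A$2$1*?w$1 + (A$2$2 - \<mu>)*?w$2 = 0" by (simp add: vector_def algebra_simps)
      qed
    next
      case F2: False
      let ?w = "vector [1, 0] :: complex^2"
      show ?thesis
      proof (rule ev[of ?w])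
        show "?w \<noteq> 0" by (auto simp: vec_eq_iff forall_2 vector_def)
      qed (use False F2 in \<open>auto simp: vector_def\<close>)
    qed
  qed
qed

lemma dF_aux:
  assumes g: "(g has_field_derivative inverse (2 * g z0)) (at z0)" "g z0 \<noteq> 0" "\<And>z. (g z)^2 = z"
  shows "((\<lambda>z. cos (csqrt z)^2) has_field_derivative -(c0 z0 * s0 z0)) (at z0)"
proof -
  have eq: "cos (csqrt z)^2 = cos (g z)^2" for z
  proof -
    have "(csqrt z)^2 = (g z)^2" using g(3) by simp
    then have "csqrt z = g z \<or> csqrt z = - g z" using power2_eq_iff by blast
    then show ?thesis by auto
  qed
  have z0: "z0 \<noteq> 0" using g(2) g(3)[of z0] by auto
  have "((\<lambda>z. cos (g z)) has_field_derivative -sin (g z0) * inverse (2 * g z0)) (at z0)"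
    using DERIV_chain2[OF DERIV_cos g(1)] .
  from DERIV_power[OF this, of 2]
  have "((\<lambda>z. cos (g z)^2) has_field_derivative
          (of_nat 2 * cos (g z0)^1 * (- sin (g z0) * inverse (2 * g z0)))) (at z0)"
    by (simp add: algebra_simps)
  moreover have "of_nat 2 * cos (g z0)^1 * (- sin (g z0) * inverse (2 * g z0))
      = -(cos (g z0) * sin (g z0) / g z0)"
    using g(2) by (simp add: field_simps)
  moreover have "c0 z0 * s0 z0 = cos (g z0) * sin (g z0) / g z0"
  proof -
    have "(csqrt z0)^2 = (g z0)^2" using g(3) by simp
    then have "csqrt z0 = g z0 \<or> csqrt z0 = - g z0" using power2_eq_iff by blast
    then show ?thesis using z0 by (auto simp: c0_def s0_def)
  qed
  ultimately show ?thesis using eq by simp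
qed

lemma dF0: "((\<lambda>z. cos (csqrt z)^2) has_field_derivative -(c0 0 * s0 0)) (at 0)"
proof -
  have sinlim: "((\<lambda>w. sin w / w) \<longlongrightarrow> 1) (at (0::complex))"
  proof -
    have "(sin has_field_derivative cos 0) (at (0::complex))" by (rule DERIV_sin)
    then have "((\<lambda>w. (sin w - sin 0) / (w - 0)) \<longlongrightarrow> cos 0) (at (0::complex))"
      using has_field_derivative_iff by blast
    then show ?thesis by simp
  qed
  have cs: "filterlim csqrt (at 0) (at (0::complex))"
  proof (subst filterlim_at, intro conjI)
    show "\<forall>\<^sub>F x in at 0. csqrt x \<in> UNIV \<and> csqrt x \<noteq> 0" by (auto simp: eventually_at_filter)
    have "((\<lambda>x. sqrt (norm x)) \<longlongrightarrow> sqrt (norm (0::complex))) (at (0::complex))"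
      by (intro tendsto_intros)
    then have "((\<lambda>x. norm (csqrt x)) \<longlongrightarrow> 0) (at (0::complex))" by simp
    then show "(csqrt \<longlongrightarrow> 0) (at 0)" using tendsto_norm_zero_iff by blast
  qed
  have lim1: "((\<lambda>y. sin (csqrt y) / csqrt y) \<longlongrightarrow> 1) (at (0::complex))"
    using filterlim_compose[OF sinlim cs] by simp
  have lim2: "((\<lambda>y. - ((sin (csqrt y) / csqrt y)^2)) \<longlongrightarrow> -(1^2)) (at (0::complex))"
    by (intro tendsto_intros lim1)
  have "((\<lambda>y. (cos (csqrt y)^2 - cos (csqrt 0)^2) / (y - 0)) \<longlongrightarrow> -1) (at (0::complex))"
  proof (rule Lim_transform_eventually[OF lim2[simplified]])
    show "\<forall>\<^sub>F y in at 0. - ((sin (csqrt y) / csqrt y)^2) = (cos (csqrt y)^2 - cos (csqrt 0)^2) / (y - 0)"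
    proof (rule eventually_at_filter[THEN iffD2], intro always_eventually allI impI)
      fix y :: complex assume "y \<noteq> 0"
      then have ne: "csqrt y \<noteq> 0" by simp
      have "cos (csqrt y)^2 - 1 = - (sin (csqrt y)^2)" using sin_squared_eq[of "csqrt y"] by simp
      moreover have "y = (csqrt y)^2" by simp
      ultimately show "- ((sin (csqrt y) / csqrt y)^2) = (cos (csqrt y)^2 - cos (csqrt 0)^2) / (y - 0)"
        using ne by (simp add: power_divide)
    qed
  qed
  then have "((\<lambda>z. cos (csqrt z)^2) has_field_derivative -1) (at 0)"
    by (subst has_field_derivative_iff) simp
  then show ?thesis by (simp add: c0_def s0_def)
qed

lemma dF: "((\<lambda>z. cos (csqrt z)^2) has_field_derivative -(c0 z0 * s0 z0)) (at z0)"
proof (cases "z0 = 0")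
  case True then show ?thesis using dF0 by simp
next
  case False
  show ?thesis
  proof (cases "z0 \<in> \<real>\<^sub>\<le>\<^sub>0")
    case False
    show ?thesis
    proof (rule dF_aux[where g = csqrt])
      show "(csqrt has_field_derivative inverse (2 * csqrt z0)) (at z0)"
        using has_field_derivative_csqrt[OF False] .
    qed (use \<open>z0 \<noteq> 0\<close> in auto)
  next
    case True
    have nz: "- z0 \<notin> \<real>\<^sub>\<le>\<^sub>0" using True \<open>z0 \<noteq> 0\<close>
      by (auto simp: complex_nonpos_Reals_iff complex_eq_iff)
    show ?thesis
    proof (rule dF_aux[where g = "\<lambda>z. \<i> * csqrt (- z)"])
      have "((\<lambda>z. \<i> * csqrt (- z)) has_field_derivative \<i> * (- 1 / (2 * csqrt (- z0)))) (at z0)"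
        by (intro derivative_eq_intros nz) auto
      moreover have E: "\<i> * (- 1 / (2 * csqrt (- z0))) = inverse (2 * (\<i> * csqrt (- z0)))"
        using \<open>z0 \<noteq> 0\<close> by (simp add: field_simps)
      ultimately show "((\<lambda>z. \<i> * csqrt (- z)) has_field_derivative inverse (2 * (\<i> * csqrt (- z0)))) (at z0)"
        by metis
      show "\<i> * csqrt (- z0) \<noteq> 0" using \<open>z0 \<noteq> 0\<close> by simp
      show "(\<i> * csqrt (- z))^2 = z" for z by (simp add: power_mult_distrib)
    qed
  qed
qed

lemma trace_aux:
  fixes a b p q \<beta> \<rho> :: complex
  assumes "q = a" "a * q - b * p = 1"
  shows "a*a + \<beta> * b * p + \<rho> * (p * b + \<beta> * q * q) = (1 + \<beta>) * (1 + \<rho>) * a^2 - (\<beta> + \<rho>)"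
proof -
  have bp: "b * p = a * a - 1" using assms by (simp add: algebra_simps)
  have "a*a + \<beta> * b * p + \<rho> * (p * b + \<beta> * q * q) = a*a + \<beta> * (b * p) + \<rho> * (b * p + \<beta> * (a * a))"
    using assms(1) by (simp add: algebra_simps)
  also have "\<dots> = (1 + \<beta>) * (1 + \<rho>) * a^2 - (\<beta> + \<rho>)"
    unfolding bp by (simp add: algebra_simps power2_eq_square)
  finally show ?thesis .
qed

lemma trace_T0:
  "T0 nb nr z $ 1 $ 1 + T0 nb nr z $ 2 $ 2
   = (1 + 1/of_nat nb) * (1 + 1/of_nat nr) * cos (csqrt z)^2 - (1/of_nat nb + 1/of_nat nr)"
proof -
  have q: "s0' z = c0 z" by (simp add: c0_def s0'_def)
  have "T0 nb nr z $ 1 $ 1 + T0 nb nr z $ 2 $ 2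
     = (1 + 1/of_nat nb) * (1 + 1/of_nat nr) * (c0 z)^2 - (1/of_nat nb + 1/of_nat nr)"
    unfolding T0_entries by (rule trace_aux[OF q detM])
  then show ?thesis by (simp add: c0_def)
qed

lemma det_T0:
  "T0 nb nr z $ 1 $ 1 * T0 nb nr z $ 2 $ 2 - T0 nb nr z $ 1 $ 2 * T0 nb nr z $ 2 $ 1
   = (1/of_nat nb) * (1/of_nat nr)"
proof -
  have "T0 nb nr z $ 1 $ 1 * T0 nb nr z $ 2 $ 2 - T0 nb nr z $ 1 $ 2 * T0 nb nr z $ 2 $ 1
     = (1/of_nat nb) * (1/of_nat nr) * (c0 z * s0' z - s0 z * c0' z)^2"
    unfolding T0_entries by (simp add: algebra_simps power2_eq_square)
  then show ?thesis using detM[of z] by simp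
qed

lemma eig_T0:
  "is_eigenvalue (T0 nb nr z) \<mu> \<longleftrightarrow>
   \<mu>^2 - ((1 + 1/of_nat nb) * (1 + 1/of_nat nr) * cos (csqrt z)^2 - (1/of_nat nb + 1/of_nat nr)) * \<mu>
     + (1/of_nat nb) * (1/of_nat nr) = 0"
proof -
  let ?A = "T0 nb nr z"
  have "(?A$1$1 - \<mu>)*(?A$2$2 - \<mu>) - ?A$1$2*?A$2$1
      = \<mu>^2 - (?A$1$1 + ?A$2$2) * \<mu> + (?A$1$1 * ?A$2$2 - ?A$1$2 * ?A$2$1)"
    by (simp add: algebra_simps power2_eq_square)
  then show ?thesis unfolding eig2 trace_T0 det_T0 by simp
qed

theorem lemma5p3:
  fixes \<delta>B \<delta>R :: nat
  assumes "\<delta>B \<ge> 1" and "\<delta>R \<ge> 1"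
  shows "snd ` curveC \<delta>B \<delta>R = - {0}
    \<and> (\<forall>z0 S \<Psi>. (\<exists>\<mu>1 \<mu>2. \<mu>1 \<noteq> \<mu>2 \<and> is_eigenvalue (T0 \<delta>B \<delta>R z0) \<mu>1
                              \<and> is_eigenvalue (T0 \<delta>B \<delta>R z0) \<mu>2)
          \<and> open S \<and> z0 \<in> S \<and> \<Psi> holomorphic_on S
          \<and> (\<forall>z\<in>S. is_eigenvalue (T0 \<delta>B \<delta>R z) (\<Psi> z))
          \<longrightarrow> deriv \<Psi> z0 \<noteq> 0 \<or> c0 z0 * s0 z0 = 0)"
proof -
  define K :: complex where "K = (1 + 1/of_nat \<delta>B) * (1 + 1/of_nat \<delta>R)"
  define L :: complex where "L = 1/of_nat \<delta>B + 1/of_nat \<delta>R"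
  define D :: complex where "D = (1/of_nat \<delta>B) * (1/of_nat \<delta>R)"
  have eig: "is_eigenvalue (T0 \<delta>B \<delta>R z) \<mu> \<longleftrightarrow> \<mu>^2 - (K * cos (csqrt z)^2 - L) * \<mu> + D = 0" for z \<mu>
    unfolding eig_T0 K_def L_def D_def ..
  have D0: "D \<noteq> 0" using assms unfolding D_def by auto
  have K0: "K \<noteq> 0"
  proof -
    have "(1 + 1/of_nat n :: complex) \<noteq> 0" if "n \<ge> 1" for n :: nat
    proof -
      have "(1 + 1/of_nat n :: complex) = (of_nat (Suc n)) / of_nat n" using that by (simp add: field_simps)
      then show ?thesis using that by (simp del: of_nat_Suc)
    qed
    then show ?thesis unfolding K_def using assms by simp
  qed
  have nz: "\<mu> \<noteq> 0" if "is_eigenvalue (T0 \<delta>B \<delta>R z) \<mu>" for z \<mu>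
    using that D0 unfolding eig by auto
  have part1: "snd ` curveC \<delta>B \<delta>R = - {0}"
  proof
    show "snd ` curveC \<delta>B \<delta>R \<subseteq> - {0}"
      using nz by (auto simp: curveC_def)
  next
    show "- {0} \<subseteq> snd ` curveC \<delta>B \<delta>R"
    proof
      fix \<mu> :: complex assume "\<mu> \<in> - {0}"
      then have m0: "\<mu> \<noteq> 0" by simp
      define b where "b = (\<mu> + D/\<mu> + L) / K"
      define w where "w = Arccos (csqrt b)"
      define z where "z = w^2"
      have "(csqrt z)^2 = w^2" unfolding z_def by simp
      then have "csqrt z = w \<or> csqrt z = - w" using power2_eq_iff by blast
      then have "cos (csqrt z) = csqrt b" unfolding w_def by auto
      then have "cos (csqrt z)^2 = b" by simp
      then have "is_eigenvalue (T0 \<delta>B \<delta>R z) \<mu>" unfolding eig b_def using K0 m0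
        by (simp add: field_simps power2_eq_square)
      then have "(z, \<mu>) \<in> curveC \<delta>B \<delta>R" by (simp add: curveC_def)
      then show "\<mu> \<in> snd ` curveC \<delta>B \<delta>R" by force
    qed
  qed
  have part2: "deriv \<Psi> z0 \<noteq> 0 \<or> c0 z0 * s0 z0 = 0"
    if "open S" "z0 \<in> S" "\<Psi> holomorphic_on S" "\<forall>z\<in>S. is_eigenvalue (T0 \<delta>B \<delta>R z) (\<Psi> z)"
    for z0 S \<Psi>
  proof (rule disjCI)
    assume d0: "\<not> (c0 z0 * s0 z0 = 0)"
    have dP: "(\<Psi> has_field_derivative deriv \<Psi> z0) (at z0)"
      using holomorphic_derivI[OF that(3,1,2)] .
    have P0: "\<Psi> z0 \<noteq> 0" using nz that(2,4) by blast
    have I: "((\<lambda>z. inverse (\<Psi> z)) has_field_derivative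
              - (deriv \<Psi> z0 * inverse (\<Psi> z0 ^ Suc (Suc 0)))) (at z0)"
      by (rule DERIV_inverse_fun[OF dP P0])
    have G0: "((\<lambda>z. \<Psi> z + D * inverse (\<Psi> z)) has_field_derivative
              deriv \<Psi> z0 + D * (- (deriv \<Psi> z0 * inverse (\<Psi> z0 ^ Suc (Suc 0))))) (at z0)"
      by (intro DERIV_add dP DERIV_cmult I)
    have G: "((\<lambda>z. \<Psi> z + D / \<Psi> z) has_field_derivative
              deriv \<Psi> z0 + D * (- (deriv \<Psi> z0 * inverse (\<Psi> z0 ^ Suc (Suc 0))))) (at z0)"
      using G0 by (simp add: divide_inverse)
    have "((\<lambda>z. K * cos (csqrt z)^2 - L) has_field_derivative
              deriv \<Psi> z0 + D * (- (deriv \<Psi> z0 * inverse (\<Psi> z0 ^ Suc (Suc 0))))) (at z0)"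
    proof (rule has_field_derivative_transform_within_open[OF G that(1,2)])
      fix z assume "z \<in> S"
      then have e: "is_eigenvalue (T0 \<delta>B \<delta>R z) (\<Psi> z)" and n: "\<Psi> z \<noteq> 0"
        using that(4) nz by auto
      from e[unfolded eig] n show "\<Psi> z + D / \<Psi> z = K * cos (csqrt z)^2 - L"
        by (simp add: field_simps power2_eq_square)
    qed
    moreover have "((\<lambda>z. K * cos (csqrt z)^2 - L) has_field_derivative K * (-(c0 z0 * s0 z0)) - 0) (at z0)"
      by (intro DERIV_diff DERIV_cmult dF DERIV_const)
    ultimately have "K * (-(c0 z0 * s0 z0)) - 0 =
        deriv \<Psi> z0 + D * (- (deriv \<Psi> z0 * inverse (\<Psi> z0 ^ Suc (Suc 0))))"
      using DERIV_unique by blast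
    then show "deriv \<Psi> z0 \<noteq> 0" using K0 d0 by auto
  qed
  show ?thesis using part1 part2 by blast
qed

end
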